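(* For every $\alpha>0$ there exist constants $K,\kappa>0$, depending only on $\alpha$, such that the following holds. For all $0<\beta\le1$, all $N,m\ge1$, and all strictly increasing $m$-tuples $p=(p_1<\dots<p_m)$ and $q=(q_1<\dots<q_m)$ of integers in $[1,N]$ with $|p-q|_1\ge\alpha N$, $$Z_\beta(p,q)\le(K/\beta)^{2m}e^{-\kappa\beta N}.$$
   Context: Here $|p-q|_1=\sum_a|p_a-q_a|$ and $$Z_\beta(p,q)=\sum_{\sigma\in S_m}e^{-\beta E_\sigma(p,q)},\qquad E_\sigma(p,q)=\sum_{a=1}^m|p_a-q_{\sigma(a)}|,$$ where $S_m$ is the symmetric group on $m$ elements. *)

theory Defs
  imports "HOL-Analysis.Analysis"
begin

text \<open>Tuples p = (p_1,...,p_m) are modelled as functions nat => int, indexed by {1..m}.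
  Permutations in S_m are the functions permuting {1..m}.\<close>

definition l1dist :: "nat \<Rightarrow> (nat \<Rightarrow> int) \<Rightarrow> (nat \<Rightarrow> int) \<Rightarrow> real" where
  "l1dist m p q = (\<Sum>a\<in>{1..m}. real_of_int \<bar>p a - q a\<bar>)"

definition energy :: "nat \<Rightarrow> (nat \<Rightarrow> int) \<Rightarrow> (nat \<Rightarrow> int) \<Rightarrow> (nat \<Rightarrow> nat) \<Rightarrow> real" where
  "energy m p q \<sigma> = (\<Sum>a\<in>{1..m}. real_of_int \<bar>p a - q (\<sigma> a)\<bar>)"

definition Zpart :: "real \<Rightarrow> nat \<Rightarrow> (nat \<Rightarrow> int) \<Rightarrow> (nat \<Rightarrow> int) \<Rightarrow> real" where
  "Zpart \<beta> m p q = (\<Sum>\<sigma>\<in>{\<sigma>. \<sigma> permutes {1..m}}. exp (- \<beta> * energy m p q \<sigma>))"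

end

theory Submission imports Defs begin


lemma four: "(a::int) \<le> b \<Longrightarrow> c \<le> d \<Longrightarrow> \<bar>b - d\<bar> + \<bar>a - c\<bar> \<le> \<bar>b - c\<bar> + \<bar>a - d\<bar>"
  by arith

lemma energy_ge:
  assumes "\<forall>x\<in>{1..m}. \<forall>y\<in>{1..m}. x \<le> y \<longrightarrow> p x \<le> p y"
    and "\<forall>x\<in>{1..m}. \<forall>y\<in>{1..m}. x \<le> y \<longrightarrow> q x \<le> q y"
    and "\<sigma> permutes {1..m}"
  shows "l1dist m p q \<le> energy m p q \<sigma>"
  using assms
proof (induction m arbitrary: \<sigma>)
  case 0
  then show ?case by (simp add: l1dist_def energy_def)
next
  case (Suc n)
  define M where "M = Suc n"
  have per: "\<sigma> permutes {1..M}" using Suc M_def by simp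
  define j where "j = \<sigma> M"
  define k where "k = inv \<sigma> M"
  have Min: "M \<in> {1..M}" by (simp add: M_def)
  have jin: "j \<in> {1..M}" using permutes_in_image[OF per] Min by (simp add: j_def)
  have sk: "\<sigma> k = M" using permutes_inverses(1)[OF per] by (simp add: k_def)
  have kin: "k \<in> {1..M}" using permutes_in_image[OF per, of k] Min sk by simp
  define \<tau> where "\<tau> = Transposition.transpose j M \<circ> \<sigma>"
  have tper: "\<tau> permutes {1..M}" unfolding \<tau>_def
    by (rule permutes_compose[OF per permutes_swap_id[OF jin Min]])
  have tM: "\<tau> M = M" by (simp add: \<tau>_def j_def)
  have tper': "\<tau> permutes {1..n}"
    by (rule permutes_superset[OF tper]) (metis DiffE M_def atLeastAtMost_iff le_SucE tM)
  define f where "f = (\<lambda>a b. real_of_int \<bar>p a - q b\<bar>)"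
  have eM: "energy M p q \<sigma> = (\<Sum>a\<in>{1..M}. f a (\<sigma> a))" by (simp add: energy_def f_def)
  have eMt: "energy M p q \<tau> = (\<Sum>a\<in>{1..M}. f a (\<tau> a))" by (simp add: energy_def f_def)
  have key: "energy M p q \<tau> \<le> energy M p q \<sigma>"
  proof (cases "k = M")
    case True
    then have "j = M" using sk j_def by simp
    then have "\<tau> = \<sigma>" by (simp add: \<tau>_def)
    then show ?thesis by simp
  next
    case False
    then have jM: "j \<noteq> M" using sk j_def injD[OF permutes_inj[OF per], of k M] by auto
    have kn: "k \<le> n" "1 \<le> k" using kin False M_def by auto
    have jn: "j \<le> n" "1 \<le> j" using jin jM M_def by auto
    have tk: "\<tau> k = j" by (simp add: \<tau>_def sk)
    have rest: "\<And>a. a \<in> {1..M} - {k, M} \<Longrightarrow> \<tau> a = \<sigma> a"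
    proof -
      fix a assume a: "a \<in> {1..M} - {k, M}"
      have "\<sigma> a \<noteq> M" using a sk injD[OF permutes_inj[OF per], of a k] by auto
      moreover have "\<sigma> a \<noteq> j" using a j_def injD[OF permutes_inj[OF per], of a M] by auto
      ultimately show "\<tau> a = \<sigma> a" by (simp add: \<tau>_def transpose_apply_other)
    qed
    have fin: "finite {1..M}" by simp
    have seteq: "{1..M} - {M} - {k} = {1..M} - {k, M}" by auto
    have split: "\<And>g::nat\<Rightarrow>real. (\<Sum>a\<in>{1..M}. g a) = g M + g k + (\<Sum>a\<in>{1..M} - {k, M}. g a)"
    proof -
      fix g :: "nat \<Rightarrow> real"
      have "(\<Sum>a\<in>{1..M}. g a) = g M + (\<Sum>a\<in>{1..M} - {M}. g a)"
        using sum.remove[OF fin Min] by simp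
      also have "(\<Sum>a\<in>{1..M} - {M}. g a) = g k + (\<Sum>a\<in>{1..M} - {M} - {k}. g a)"
        using sum.remove[of "{1..M} - {M}" k] kin False by simp
      finally show "(\<Sum>a\<in>{1..M}. g a) = g M + g k + (\<Sum>a\<in>{1..M} - {k, M}. g a)" using seteq by simp
    qed
    have sr: "(\<Sum>a\<in>{1..M} - {k, M}. f a (\<tau> a)) = (\<Sum>a\<in>{1..M} - {k, M}. f a (\<sigma> a))"
      using rest by simp
    have pk: "p k \<le> p M" using Suc.prems(1) kn M_def by auto
    have qj: "q j \<le> q M" using Suc.prems(2) jn M_def by auto
    have "f M M + f k j \<le> f M j + f k M"
      using four[OF pk qj] by (simp add: f_def)
    then show ?thesis using split[of "\<lambda>a. f a (\<sigma> a)"] split[of "\<lambda>a. f a (\<tau> a)"] sr eM eMt tM tk sk j_def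
      by simp
  qed
  have IH: "l1dist n p q \<le> energy n p q \<tau>"
    using Suc.IH[OF _ _ tper'] Suc.prems(1,2) by auto
  have e1: "energy M p q \<tau> = energy n p q \<tau> + real_of_int \<bar>p M - q M\<bar>"
    by (simp add: energy_def M_def tM[unfolded M_def])
  have l1: "l1dist M p q = l1dist n p q + real_of_int \<bar>p M - q M\<bar>"
    by (simp add: l1dist_def M_def)
  show ?case using key IH e1 l1 M_def by simp
qed


lemma geom_inj:
  fixes r :: real and h :: "'a \<Rightarrow> nat"
  assumes "0 \<le> r" "r < 1" "finite Q" "inj_on h Q"
  shows "(\<Sum>x\<in>Q. r ^ h x) \<le> 1 / (1 - r)"
proof -
  obtain L where L: "h ` Q \<subseteq> {..<L}"
    using finite_nat_bounded[OF finite_imageI[OF assms(3)]] by blast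
  have "(\<Sum>x\<in>Q. r ^ h x) = (\<Sum>i\<in>h ` Q. r ^ i)"
    using sum.reindex[OF assms(4), of "\<lambda>i. r ^ i"] by simp
  also have "\<dots> \<le> (\<Sum>i<L. r ^ i)"
    by (rule sum_mono2[OF _ L]) (auto simp: assms(1))
  also have "\<dots> = (1 - r ^ L) / (1 - r)"
    using sum_gp_strict[of r L] assms by simp
  also have "\<dots> \<le> 1 / (1 - r)"
    using assms by (intro divide_right_mono) auto
  finally show ?thesis .
qed

lemma exp_bound:
  fixes \<gamma> :: real assumes "0 < \<gamma>" "\<gamma> \<le> 1"
  shows "1 / (1 - exp (- \<gamma>)) \<le> 2 / \<gamma>"
proof -
  have e: "1 + \<gamma> \<le> exp \<gamma>" by (rule exp_ge_add_one_self)
  have "exp (- \<gamma>) = 1 / exp \<gamma>" by (simp add: exp_minus field_simps)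
  also have "\<dots> \<le> 1 / (1 + \<gamma>)" using e assms by (intro divide_left_mono) auto
  finally have "exp (- \<gamma>) \<le> 1 / (1 + \<gamma>)" .
  then have e2: "2 * exp (- \<gamma>) * (1 + \<gamma>) \<le> 2 * 1" using assms by (simp add: field_simps)
  have "2 \<le> (2 - \<gamma>) * (1 + \<gamma>)" using assms by (simp add: algebra_simps mult_left_le)
  then have "2 * exp (- \<gamma>) * (1 + \<gamma>) \<le> (2 - \<gamma>) * (1 + \<gamma>)" using e2 by linarith
  then have "2 * exp (- \<gamma>) \<le> 2 - \<gamma>" using assms by (metis mult_right_le_imp_le add_pos_pos zero_less_one)
  then have "\<gamma> / 2 \<le> 1 - exp (- \<gamma>)" by simp
  then show ?thesis using assms by (simp add: field_simps)
qed

lemma half_bound: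
  fixes \<gamma> :: real and Q :: "int set"
  assumes "0 < \<gamma>" "\<gamma> \<le> 1" "finite Q" "\<forall>x\<in>Q. x0 \<le> x"
  shows "(\<Sum>x\<in>Q. exp (- \<gamma> * real_of_int \<bar>x0 - x\<bar>)) \<le> 2 / \<gamma>"
proof -
  have eq: "\<And>x. x \<in> Q \<Longrightarrow> exp (- \<gamma> * real_of_int \<bar>x0 - x\<bar>) = exp (- \<gamma>) ^ nat (x - x0)"
  proof -
    fix x assume "x \<in> Q"
    then have "real_of_int \<bar>x0 - x\<bar> = real (nat (x - x0))" using assms(4) by auto
    then show "exp (- \<gamma> * real_of_int \<bar>x0 - x\<bar>) = exp (- \<gamma>) ^ nat (x - x0)"
      by (simp add: exp_of_nat_mult[symmetric] mult.commute)
  qed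
  have inj: "inj_on (\<lambda>x. nat (x - x0)) Q"
  proof (rule inj_onI)
    fix x y assume "x \<in> Q" "y \<in> Q" "nat (x - x0) = nat (y - x0)"
    then have "int (nat (x - x0)) = int (nat (y - x0))" by simp
    then show "x = y" using assms(4) \<open>x \<in> Q\<close> \<open>y \<in> Q\<close> by force
  qed
  have "(\<Sum>x\<in>Q. exp (- \<gamma> * real_of_int \<bar>x0 - x\<bar>)) = (\<Sum>x\<in>Q. exp (- \<gamma>) ^ nat (x - x0))"
    using eq by simp
  also have "\<dots> \<le> 1 / (1 - exp (- \<gamma>))"
    by (rule geom_inj[OF _ _ assms(3) inj]) (use assms in auto)
  also have "\<dots> \<le> 2 / \<gamma>" by (rule exp_bound[OF assms(1,2)])
  finally show ?thesis .
qed

lemma half_bound2: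
  fixes \<gamma> :: real and Q :: "int set"
  assumes "0 < \<gamma>" "\<gamma> \<le> 1" "finite Q" "\<forall>x\<in>Q. x < x0"
  shows "(\<Sum>x\<in>Q. exp (- \<gamma> * real_of_int \<bar>x0 - x\<bar>)) \<le> 2 / \<gamma>"
proof -
  have eq: "\<And>x. x \<in> Q \<Longrightarrow> exp (- \<gamma> * real_of_int \<bar>x0 - x\<bar>) = exp (- \<gamma>) ^ nat (x0 - x)"
  proof -
    fix x assume "x \<in> Q"
    then have "real_of_int \<bar>x0 - x\<bar> = real (nat (x0 - x))" using assms(4) by auto
    then show "exp (- \<gamma> * real_of_int \<bar>x0 - x\<bar>) = exp (- \<gamma>) ^ nat (x0 - x)"
      by (simp add: exp_of_nat_mult[symmetric] mult.commute)
  qed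
  have inj: "inj_on (\<lambda>x. nat (x0 - x)) Q"
  proof (rule inj_onI)
    fix x y assume "x \<in> Q" "y \<in> Q" "nat (x0 - x) = nat (x0 - y)"
    moreover have "x < x0" "y < x0" using assms(4) \<open>x \<in> Q\<close> \<open>y \<in> Q\<close> by auto
    ultimately show "x = y" by simp
  qed
  have "(\<Sum>x\<in>Q. exp (- \<gamma> * real_of_int \<bar>x0 - x\<bar>)) = (\<Sum>x\<in>Q. exp (- \<gamma>) ^ nat (x0 - x))"
    using eq by simp
  also have "\<dots> \<le> 1 / (1 - exp (- \<gamma>))"
    by (rule geom_inj[OF _ _ assms(3) inj]) (use assms in auto)
  also have "\<dots> \<le> 2 / \<gamma>" by (rule exp_bound[OF assms(1,2)])
  finally show ?thesis .
qed

lemma row_bound: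
  fixes \<gamma> :: real and Q :: "int set"
  assumes "0 < \<gamma>" "\<gamma> \<le> 1" "finite Q"
  shows "(\<Sum>x\<in>Q. exp (- \<gamma> * real_of_int \<bar>x0 - x\<bar>)) \<le> 4 / \<gamma>"
proof -
  let ?f = "\<lambda>x. exp (- \<gamma> * real_of_int \<bar>x0 - x\<bar>)"
  have U: "{x\<in>Q. x0 \<le> x} \<union> {x\<in>Q. x < x0} = Q" by auto
  have "(\<Sum>x\<in>Q. ?f x) = (\<Sum>x\<in>{x\<in>Q. x0 \<le> x} \<union> {x\<in>Q. x < x0}. ?f x)" by (simp only: U)
  also have "\<dots> = (\<Sum>x\<in>{x\<in>Q. x0 \<le> x}. ?f x) + (\<Sum>x\<in>{x\<in>Q. x < x0}. ?f x)"
    by (rule sum.union_disjoint) (use assms(3) in auto)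
  also have "\<dots> \<le> 2 / \<gamma> + 2 / \<gamma>"
    by (intro add_mono half_bound half_bound2) (use assms in auto)
  finally show ?thesis by simp
qed


lemma perm_sum_bound:
  fixes g :: "nat \<Rightarrow> nat \<Rightarrow> real"
  assumes "\<And>a b. 0 \<le> g a b"
  shows "(\<Sum>\<sigma>\<in>{\<sigma>. \<sigma> permutes {1..m}}. \<Prod>a\<in>{1..m}. g a (\<sigma> a))
         \<le> (\<Prod>a\<in>{1..m}. \<Sum>b\<in>{1..m}. g a b)"
proof -
  let ?S = "{1..m::nat}"
  let ?P = "{\<sigma>. \<sigma> permutes ?S}"
  let ?F = "\<lambda>f. \<Prod>a\<in>?S. g a (f a)"
  have inj: "inj_on (\<lambda>\<sigma>. restrict \<sigma> ?S) ?P"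
  proof (rule inj_onI)
    fix s t assume s: "s \<in> ?P" and t: "t \<in> ?P" and e: "restrict s ?S = restrict t ?S"
    show "s = t"
    proof
      fix x show "s x = t x"
      proof (cases "x \<in> ?S")
        case True then show ?thesis using e by (metis restrict_apply')
      next
        case False then show ?thesis using s t by (simp add: permutes_not_in)
      qed
    qed
  qed
  have "(\<Sum>\<sigma>\<in>?P. ?F \<sigma>) = (\<Sum>\<sigma>\<in>?P. ?F (restrict \<sigma> ?S))"
    by (intro sum.cong refl prod.cong) auto
  also have "\<dots> = (\<Sum>f\<in>(\<lambda>\<sigma>. restrict \<sigma> ?S) ` ?P. ?F f)"
    using sum.reindex[OF inj, of ?F] by simp
  also have "\<dots> \<le> (\<Sum>f\<in>PiE ?S (\<lambda>_. ?S). ?F f)"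
  proof (rule sum_mono2)
    show "finite (PiE ?S (\<lambda>_. ?S))" by (simp add: finite_PiE)
    show "(\<lambda>\<sigma>. restrict \<sigma> ?S) ` ?P \<subseteq> PiE ?S (\<lambda>_. ?S)"
    proof
      fix f assume "f \<in> (\<lambda>\<sigma>. restrict \<sigma> ?S) ` ?P"
      then obtain \<sigma> where s: "\<sigma> permutes ?S" and f: "f = restrict \<sigma> ?S" by auto
      have "\<forall>i\<in>?S. \<sigma> i \<in> ?S" using permutes_in_image[OF s] by blast
      then show "f \<in> PiE ?S (\<lambda>_. ?S)" unfolding f by (simp only: restrict_PiE_iff)
    qed
    show "\<And>f. f \<in> PiE ?S (\<lambda>_. ?S) - (\<lambda>\<sigma>. restrict \<sigma> ?S) ` ?P \<Longrightarrow> 0 \<le> ?F f"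
      using assms by (simp add: prod_nonneg)
  qed
  also have "\<dots> = (\<Prod>a\<in>?S. \<Sum>b\<in>?S. g a b)"
    by (rule prod_sum_PiE[symmetric]) auto
  finally show ?thesis .
qed

theorem mainTheorem12:
  fixes \<alpha> :: real
  assumes "\<alpha> > 0"
  shows "\<exists>K \<kappa> :: real. K > 0 \<and> \<kappa> > 0 \<and>
    (\<forall>(\<beta>::real) (N::nat) (m::nat) (p::nat \<Rightarrow> int) (q::nat \<Rightarrow> int).
       0 < \<beta> \<longrightarrow> \<beta> \<le> 1 \<longrightarrow> N \<ge> 1 \<longrightarrow> m \<ge> 1 \<longrightarrow>
       strict_mono_on {1..m} p \<longrightarrow> strict_mono_on {1..m} q \<longrightarrow>
       (\<forall>a\<in>{1..m}. 1 \<le> p a \<and> p a \<le> int N \<and> 1 \<le> q a \<and> q a \<le> int N) \<longrightarrow>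
       l1dist m p q \<ge> \<alpha> * real N \<longrightarrow>
       Zpart \<beta> m p q \<le> (K / \<beta>) ^ (2 * m) * exp (- \<kappa> * \<beta> * real N))"
proof (rule exI[of _ 8], rule exI[of _ "\<alpha> / 2"], intro conjI allI impI)
  show "(0::real) < 8" by simp
  show "0 < \<alpha> / 2" using assms by simp
  fix \<beta> :: real and N m :: nat and p q :: "nat \<Rightarrow> int"
  assume b0: "0 < \<beta>" and b1: "\<beta> \<le> 1" and N1: "N \<ge> 1" and m1: "m \<ge> 1"
    and sp: "strict_mono_on {1..m} p" and sq: "strict_mono_on {1..m} q"
    and rng: "\<forall>a\<in>{1..m}. 1 \<le> p a \<and> p a \<le> int N \<and> 1 \<le> q a \<and> q a \<le> int N"
    and dist: "l1dist m p q \<ge> \<alpha> * real N"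
  let ?S = "{1..m}"
  let ?P = "{\<sigma>. \<sigma> permutes ?S}"
  define g where "g = (\<lambda>a b. exp (- (\<beta> / 2) * real_of_int \<bar>p a - q b\<bar>))"
  have mp: "\<forall>x\<in>?S. \<forall>y\<in>?S. x \<le> y \<longrightarrow> p x \<le> p y"
    using sp by (metis order.order_iff_strict strict_mono_onD)
  have mq: "\<forall>x\<in>?S. \<forall>y\<in>?S. x \<le> y \<longrightarrow> q x \<le> q y"
    using sq by (metis order.order_iff_strict strict_mono_onD)
  have trm: "exp (- \<beta> * energy m p q \<sigma>) \<le> exp (- \<beta> * \<alpha> * real N / 2) * (\<Prod>a\<in>?S. g a (\<sigma> a))"
    if "\<sigma> \<in> ?P" for \<sigma>
  proof -
    have E: "\<alpha> * real N \<le> energy m p q \<sigma>"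
      using energy_ge[OF mp mq] that dist by force
    have "- \<beta> * energy m p q \<sigma> \<le> - \<beta> * \<alpha> * real N / 2 + (- (\<beta> / 2) * energy m p q \<sigma>)"
      using E b0 by (simp add: algebra_simps mult_left_mono)
    then have "exp (- \<beta> * energy m p q \<sigma>) \<le> exp (- \<beta> * \<alpha> * real N / 2 + (- (\<beta> / 2) * energy m p q \<sigma>))"
      by simp
    also have "\<dots> = exp (- \<beta> * \<alpha> * real N / 2) * exp (- (\<beta> / 2) * energy m p q \<sigma>)"
      by (rule exp_add)
    also have "exp (- (\<beta> / 2) * energy m p q \<sigma>) = (\<Prod>a\<in>?S. g a (\<sigma> a))"
      by (simp add: energy_def g_def sum_distrib_left exp_sum)
    finally show ?thesis .
  qed
  have row: "(\<Sum>b\<in>?S. g a b) \<le> 8 / \<beta>" for a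
  proof -
    have inj: "inj_on q ?S" using sq by (rule strict_mono_on_imp_inj_on)
    have "(\<Sum>b\<in>?S. g a b) = (\<Sum>x\<in>q ` ?S. exp (- (\<beta> / 2) * real_of_int \<bar>p a - x\<bar>))"
      using sum.reindex[OF inj, of "\<lambda>x. exp (- (\<beta> / 2) * real_of_int \<bar>p a - x\<bar>)"]
      by (simp add: g_def)
    also have "\<dots> \<le> 4 / (\<beta> / 2)"
      by (rule row_bound) (use b0 b1 in auto)
    finally show ?thesis by simp
  qed
  have "Zpart \<beta> m p q \<le> (\<Sum>\<sigma>\<in>?P. exp (- \<beta> * \<alpha> * real N / 2) * (\<Prod>a\<in>?S. g a (\<sigma> a)))"
    unfolding Zpart_def by (rule sum_mono) (use trm in auto)
  also have "\<dots> = exp (- \<beta> * \<alpha> * real N / 2) * (\<Sum>\<sigma>\<in>?P. \<Prod>a\<in>?S. g a (\<sigma> a))"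
    by (simp add: sum_distrib_left)
  also have "\<dots> \<le> exp (- \<beta> * \<alpha> * real N / 2) * (\<Prod>a\<in>?S. \<Sum>b\<in>?S. g a b)"
    by (intro mult_left_mono perm_sum_bound) (auto simp: g_def)
  also have "\<dots> \<le> exp (- \<beta> * \<alpha> * real N / 2) * (\<Prod>a\<in>?S. 8 / \<beta>)"
    by (intro mult_left_mono prod_mono) (use row in \<open>auto simp: g_def intro: sum_nonneg\<close>)
  also have "(\<Prod>a\<in>?S. 8 / \<beta>) = (8 / \<beta>) ^ m" by simp
  also have "(8 / \<beta>) ^ m \<le> (8 / \<beta>) ^ (2 * m)"
    by (rule power_increasing) (use b0 b1 in \<open>auto simp: field_simps\<close>)
  finally have "Zpart \<beta> m p q \<le> exp (- \<beta> * \<alpha> * real N / 2) * (8 / \<beta>) ^ (2 * m)"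
    by (simp add: mult_left_mono)
  also have "\<dots> = (8 / \<beta>) ^ (2 * m) * exp (- (\<alpha> / 2) * \<beta> * real N)"
    by (simp add: algebra_simps)
  finally show "Zpart \<beta> m p q \<le> (8 / \<beta>) ^ (2 * m) * exp (- (\<alpha> / 2) * \<beta> * real N)" .
qed

end
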